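(* Let $\mathsf{F}:\mathcal{B}(\mathbb{R}_+)\to\mathcal{L}(\mathcal{H})$ be a smeared number observable and $\mathsf{E}:\mathcal{B}([0,2\pi))\to\mathcal{L}(\mathcal{H})$ a covariant phase observable. Then $\mathsf{F}$ and $\mathsf{E}$ have a joint observable $\mathsf{M}:\mathcal{B}(\mathbb{C})\to\mathcal{L}(\mathcal{H})$ (i.e.\ $\mathsf{M}(X\times[0,2\pi))=\mathsf{F}(X)$ and $\mathsf{M}(\mathbb{R}_+\times\Theta)=\mathsf{E}(\Theta)$) if and only if they have a joint observable which is a phase shift covariant phase space observable.
   Context: $\mathcal{H}\simeq L^2(\mathbb{R})$ with number basis $\{|n\rangle\}$ and number operator $N$. $\mathbb{C}\simeq\mathbb{R}_+\times[0,2\pi)$ via polar coordinates, $X\times\Theta=\{re^{i\theta}:r\in X,\theta\in\Theta\}$; $\dot{+}$ is addition modulo $2\pi$. A covariant phase observable is a POVM $\mathsf{E}$ on $\mathcal{B}([0,2\pi))$ with $e^{i\theta N}\mathsf{E}(\Theta)e^{-i\theta N}=\mathsf{E}(\Theta\dot{+}\theta)$ for all $\Theta,\theta$. A smeared number observable is a POVM of the form $\mathsf{F}(X)=\sum_{n=0}^\infty m(X,n)|n\rangle\langle n|$ where $m:\mathcal{B}(\mathbb{R}_+)\times\mathbb{N}\to[0,1]$ is a Markov kernel (a probability measure in $X$ for each $n$). A phase shift covariant phase space observable is a POVM $\mathsf{P}$ on $\mathcal{B}(\mathbb{C})$ with $e^{i\theta N}\mathsf{P}(X\times\Theta)e^{-i\theta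 N}=\mathsf{P}(X\times(\Theta\dot{+}\theta))$ for all $X\in\mathcal{B}(\mathbb{R}_+)$, $\Theta\in\mathcal{B}([0,2\pi))$, $\theta\in[0,2\pi)$. *)

theory Defs
  imports "HOL-Probability.Probability"
begin

text \<open>Operators on H = L^2(R), identified with l^2(N) via the number basis |n>,
  are represented by their matrix elements A m n = <m|A|n>.\<close>

type_synonym opmat = "nat \<Rightarrow> nat \<Rightarrow> complex"

definition id_op :: opmat where
  "id_op = (\<lambda>m n. if m = n then 1 else 0)"

definition psd :: "opmat \<Rightarrow> bool" where
  "psd A \<longleftrightarrow> (\<forall>(\<psi>::nat \<Rightarrow> complex) (K::nat).
     Im (\<Sum>m<K. \<Sum>n<K. cnj (\<psi> m) * A m n * \<psi> n) = 0 \<and>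
     0 \<le> Re (\<Sum>m<K. \<Sum>n<K. cnj (\<psi> m) * A m n * \<psi> n))"

definition povm :: "'a measure \<Rightarrow> ('a set \<Rightarrow> opmat) \<Rightarrow> bool" where
  "povm M E \<longleftrightarrow>
     (\<forall>X\<in>sets M. psd (E X)) \<and>
     E (space M) = id_op \<and>
     (\<forall>(A::nat \<Rightarrow> 'a set) m n. range A \<subseteq> sets M \<longrightarrow> disjoint_family A \<longrightarrow>
        (\<lambda>i. E (A i) m n) sums E (\<Union>i. A i) m n)"

text \<open>Value spaces: R_+ = [0,\<infinity>), the phase interval [0,2\<pi>), and the phase space
  C identified with R_+ \<times> [0,2\<pi>) via polar coordinates.\<close>
definition Rplus :: "real measure" where
  "Rplus = restrict_space borel {0..}"

definition Phase :: "real measure" where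
  "Phase = restrict_space borel {0..<2*pi}"

definition PhSp :: "(real \<times> real) measure" where
  "PhSp = Rplus \<Otimes>\<^sub>M Phase"

definition addmod :: "real \<Rightarrow> real \<Rightarrow> real" where
  "addmod t \<theta> = t + \<theta> - 2*pi * of_int \<lfloor>(t + \<theta>) / (2*pi)\<rfloor>"

definition shift_set :: "real set \<Rightarrow> real \<Rightarrow> real set" where
  "shift_set \<Theta> \<theta> = (\<lambda>t. addmod t \<theta>) ` \<Theta>"

text \<open>Matrix of e^{i\<theta>N} A e^{-i\<theta>N}.\<close>
definition phase_conj :: "real \<Rightarrow> opmat \<Rightarrow> opmat" where
  "phase_conj \<theta> A = (\<lambda>m n. cis (\<theta> * (real m - real n)) * A m n)"

definition covariant_phase :: "(real set \<Rightarrow> opmat) \<Rightarrow> bool" where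
  "covariant_phase E \<longleftrightarrow> povm Phase E \<and>
     (\<forall>\<Theta>\<in>sets Phase. \<forall>\<theta>\<in>{0..<2*pi}. phase_conj \<theta> (E \<Theta>) = E (shift_set \<Theta> \<theta>))"

definition smeared_number :: "(real set \<Rightarrow> opmat) \<Rightarrow> bool" where
  "smeared_number F \<longleftrightarrow> (\<exists>\<mu> :: nat \<Rightarrow> real measure.
     (\<forall>n. prob_space (\<mu> n) \<and> sets (\<mu> n) = sets Rplus) \<and>
     (\<forall>X\<in>sets Rplus. F X = (\<lambda>a b. if a = b then complex_of_real (measure (\<mu> a) X) else 0)))"

definition phase_shift_covariant_ps :: "((real \<times> real) set \<Rightarrow> opmat) \<Rightarrow> bool" where
  "phase_shift_covariant_ps P \<longleftrightarrow> povm PhSp P \<and>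
     (\<forall>X\<in>sets Rplus. \<forall>\<Theta>\<in>sets Phase. \<forall>\<theta>\<in>{0..<2*pi}.
        phase_conj \<theta> (P (X \<times> \<Theta>)) = P (X \<times> shift_set \<Theta> \<theta>))"

definition joint_observable ::
  "((real \<times> real) set \<Rightarrow> opmat) \<Rightarrow> (real set \<Rightarrow> opmat) \<Rightarrow> (real set \<Rightarrow> opmat) \<Rightarrow> bool" where
  "joint_observable M F E \<longleftrightarrow> povm PhSp M \<and>
     (\<forall>X\<in>sets Rplus. M (X \<times> {0..<2*pi}) = F X) \<and>
     (\<forall>\<Theta>\<in>sets Phase. M ({0..} \<times> \<Theta>) = E \<Theta>)"

end

theory Submission
  imports Defs
begin


definition md :: "real \<Rightarrow> real" where
  "md x = x - 2*pi * of_int \<lfloor>x / (2*pi)\<rfloor>"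

lemma addmod_md: "addmod t \<theta> = md (t + \<theta>)"
  by (simp add: addmod_def md_def)

lemma md_range: "0 \<le> md x" "md x < 2*pi"
proof -
  have p: "2*pi > 0" by simp
  have "of_int \<lfloor>x / (2*pi)\<rfloor> \<le> x/(2*pi)" by (rule of_int_floor_le)
  hence "2*pi * of_int \<lfloor>x / (2*pi)\<rfloor> \<le> 2*pi * (x/(2*pi))" using p by (intro mult_left_mono) auto
  hence "2*pi * of_int \<lfloor>x / (2*pi)\<rfloor> \<le> x" by simp
  thus "0 \<le> md x" by (simp add: md_def)
  have "x/(2*pi) < of_int \<lfloor>x / (2*pi)\<rfloor> + 1" by (rule real_of_int_floor_add_one_gt)
  hence "x < 2*pi * (of_int \<lfloor>x / (2*pi)\<rfloor> + 1)" using p by (simp add: field_simps)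
  thus "md x < 2*pi" by (simp add: md_def algebra_simps)
qed

lemma md_int: "md (x + 2*pi * of_int k) = md x"
proof -
  have "(x + 2*pi * of_int k) / (2*pi) = x/(2*pi) + of_int k" by (simp add: field_simps)
  hence "\<lfloor>(x + 2*pi * of_int k) / (2*pi)\<rfloor> = \<lfloor>x/(2*pi)\<rfloor> + k" by simp
  thus ?thesis by (simp add: md_def algebra_simps)
qed

lemma md_id: "0 \<le> x \<Longrightarrow> x < 2*pi \<Longrightarrow> md x = x"
proof -
  assume "0 \<le> x" "x < 2*pi"
  hence "\<lfloor>x / (2*pi)\<rfloor> = 0" by (simp add: floor_eq_iff field_simps)
  thus ?thesis by (simp add: md_def)
qed

lemma md_md_add: "md (md x + y) = md (x + y)"
proof -
  have "md x + y = (x + y) + 2*pi * of_int (- \<lfloor>x / (2*pi)\<rfloor>)" by (simp add: md_def)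
  thus ?thesis using md_int by presburger
qed

lemma md_md_diff: "md (md x - y) = md (x - y)"
  using md_md_add[of x "-y"] by simp

lemma md_2pi: "md (x + 2*pi) = md x"
  using md_int[of x 1] by simp

lemma md_measurable[measurable]: "md \<in> borel_measurable borel"
  unfolding md_def by measurable

definition rot :: "real \<Rightarrow> real \<times> real \<Rightarrow> real \<times> real" where
  "rot \<theta> z = (fst z, md (snd z + \<theta>))"

definition Tset :: "real \<Rightarrow> (real \<times> real) set \<Rightarrow> (real \<times> real) set" where
  "Tset \<theta> Z = rot \<theta> ` Z"

lemma space_PhSp: "space PhSp = {0..} \<times> {0..<2*pi}"
  by (simp add: PhSp_def Rplus_def Phase_def space_pair_measure)

lemma space_Phase: "space Phase = {0..<2*pi}"
  by (simp add: Phase_def)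

lemma space_Rplus: "space Rplus = {0..}"
  by (simp add: Rplus_def)

lemma Tset_comp: "Tset \<theta> (Tset \<phi> Z) = Tset (\<phi> + \<theta>) Z"
  unfolding Tset_def image_image rot_def
  by (simp add: md_md_add add.assoc)

lemma Tset_period: "Tset (\<theta> + 2*pi) Z = Tset \<theta> Z"
  unfolding Tset_def rot_def
  by (metis (no_types, lifting) add.assoc md_2pi)

lemma Tset_char: "Z \<subseteq> space PhSp \<Longrightarrow> Tset \<theta> Z = {z \<in> space PhSp. rot (-\<theta>) z \<in> Z}"
proof safe
  fix z assume Z: "Z \<subseteq> space PhSp" and "z \<in> Tset \<theta> Z"
  then obtain w where w: "w \<in> Z" "z = rot \<theta> w" by (auto simp: Tset_def)
  with Z have ws: "w \<in> space PhSp" by auto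
  show "z \<in> space PhSp" using ws w md_range by (auto simp: space_PhSp rot_def)
  have "rot (-\<theta>) z = (fst w, md (md (snd w + \<theta>) + - \<theta>))" using w by (simp add: rot_def)
  also have "\<dots> = w" using ws by (simp add: md_md_add md_md_diff md_id space_PhSp mem_Times_iff)
  finally show "rot (-\<theta>) z \<in> Z" using w by simp
next
  fix z assume Z: "Z \<subseteq> space PhSp" "z \<in> space PhSp" "rot (-\<theta>) z \<in> Z"
  have "rot \<theta> (rot (-\<theta>) z) = (fst z, md (md (snd z + - \<theta>) + \<theta>))" by (simp add: rot_def)
  also have "\<dots> = z" using Z(2) by (simp add: md_md_add md_md_diff md_id space_PhSp mem_Times_iff)
  finally show "z \<in> Tset \<theta> Z" using Z(3) unfolding Tset_def by (metis image_eqI)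
qed

lemma Tset_Times: "Tset \<theta> (X \<times> \<Theta>) = X \<times> shift_set \<Theta> \<theta>"
  unfolding Tset_def shift_set_def rot_def addmod_md by (auto simp: image_def)

lemma shift_full: "shift_set {0..<2*pi} \<theta> = {0..<2*pi}"
proof (rule set_eqI, rule iffI)
  fix t assume "t \<in> shift_set {0..<2*pi} \<theta>"
  then show "t \<in> {0..<2*pi}" using md_range by (auto simp: shift_set_def addmod_md)
next
  fix t assume t: "t \<in> {0..<2*pi}"
  have "t = md (md (t - \<theta>) + \<theta>)" using t md_md_add[of "t - \<theta>" \<theta>] by (simp add: md_id)
  moreover have "md (t - \<theta>) \<in> {0..<2*pi}" using md_range by auto
  ultimately show "t \<in> shift_set {0..<2*pi} \<theta>" unfolding shift_set_def addmod_md by blast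
qed

lemma rot_measurable[measurable]:
  "(\<lambda>x. rot (- fst x) (snd x)) \<in> (lborel \<Otimes>\<^sub>M PhSp) \<rightarrow>\<^sub>M PhSp"
proof -
  have a: "(\<lambda>x::real \<times> real \<times> real. fst (snd x)) \<in> (lborel \<Otimes>\<^sub>M PhSp) \<rightarrow>\<^sub>M Rplus"
    unfolding PhSp_def by measurable
  have b0: "(\<lambda>x::real \<times> real \<times> real. snd (snd x)) \<in> (lborel \<Otimes>\<^sub>M PhSp) \<rightarrow>\<^sub>M Phase"
    unfolding PhSp_def by measurable
  have b1: "(\<lambda>x::real \<times> real \<times> real. snd (snd x)) \<in> borel_measurable (lborel \<Otimes>\<^sub>M PhSp)"
  proof -
    have "(\<lambda>x. x) \<in> Phase \<rightarrow>\<^sub>M borel" unfolding Phase_def by (rule measurable_restrict_space1) simp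
    from measurable_compose[OF b0 this] show ?thesis .
  qed
  have b2: "(\<lambda>x::real \<times> real \<times> real. md (snd (snd x) + - fst x)) \<in> borel_measurable (lborel \<Otimes>\<^sub>M PhSp)"
    using b1 by measurable
  have b: "(\<lambda>x::real \<times> real \<times> real. md (snd (snd x) + - fst x)) \<in> (lborel \<Otimes>\<^sub>M PhSp) \<rightarrow>\<^sub>M Phase"
    unfolding Phase_def
    by (rule measurable_restrict_space2) (use b2 md_range in auto)
  show ?thesis unfolding rot_def PhSp_def
    using measurable_Pair[OF a b] unfolding PhSp_def by simp
qed




lemma Tset_sets: assumes Z: "Z \<in> sets PhSp" shows "Tset \<theta> Z \<in> sets PhSp"
proof -
  have m: "(\<lambda>z. rot (-\<theta>) z) \<in> PhSp \<rightarrow>\<^sub>M PhSp"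
  proof -
    have "(\<lambda>z. (\<theta>, z)) \<in> PhSp \<rightarrow>\<^sub>M (lborel \<Otimes>\<^sub>M PhSp)" by measurable
    from measurable_compose[OF this rot_measurable] show ?thesis by simp
  qed
  have "Tset \<theta> Z = (\<lambda>z. rot (-\<theta>) z) -` Z \<inter> space PhSp"
    using Tset_char[OF sets.sets_into_space[OF Z]] by auto
  thus ?thesis using measurable_sets[OF m Z] by simp
qed

lemma sets_Phase_iff: "\<Theta> \<in> sets Phase \<longleftrightarrow> \<Theta> \<subseteq> {0..<2*pi} \<and> \<Theta> \<in> sets borel"
  unfolding Phase_def by (subst sets_restrict_space_iff) auto

lemma shift_sets: assumes T: "\<Theta> \<in> sets Phase" shows "shift_set \<Theta> \<theta> \<in> sets Phase"
proof -
  have sub: "\<Theta> \<subseteq> {0..<2*pi}" using T sets_Phase_iff by auto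
  have eq: "shift_set \<Theta> \<theta> = (\<lambda>t. md (t - \<theta>)) -` \<Theta> \<inter> space Phase"
  proof (rule set_eqI, rule iffI)
    fix t assume "t \<in> shift_set \<Theta> \<theta>"
    then obtain s where s: "s \<in> \<Theta>" "t = md (s + \<theta>)" by (auto simp: shift_set_def addmod_md)
    have "md (t - \<theta>) = s" using s sub md_md_diff[of "s+\<theta>" \<theta>] by (auto simp: md_id)
    thus "t \<in> (\<lambda>t. md (t - \<theta>)) -` \<Theta> \<inter> space Phase" using s md_range by (auto simp: space_Phase)
  next
    fix t assume t: "t \<in> (\<lambda>t. md (t - \<theta>)) -` \<Theta> \<inter> space Phase"
    have "t = md (md (t - \<theta>) + \<theta>)" using t md_md_add[of "t - \<theta>" \<theta>] by (simp add: md_id space_Phase)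
    thus "t \<in> shift_set \<Theta> \<theta>" using t unfolding shift_set_def addmod_md by blast
  qed
  have m: "(\<lambda>t. md (t - \<theta>)) \<in> Phase \<rightarrow>\<^sub>M Phase"
  proof -
    have "(\<lambda>t. md (t - \<theta>)) \<in> borel_measurable Phase" unfolding Phase_def
      by (rule measurable_restrict_space1) measurable
    thus ?thesis unfolding Phase_def
      by (intro measurable_restrict_space2) (use md_range in \<open>auto simp: Phase_def\<close>)
  qed
  show ?thesis using measurable_sets[OF m T] eq by simp
qed

definition qf :: "opmat \<Rightarrow> (nat \<Rightarrow> complex) \<Rightarrow> nat \<Rightarrow> complex" where
  "qf A \<psi> K = (\<Sum>m<K. \<Sum>n<K. cnj (\<psi> m) * A m n * \<psi> n)"

lemma psd_qf: "psd A \<Longrightarrow> qf A \<psi> K = complex_of_real (Re (qf A \<psi> K)) \<and> 0 \<le> Re (qf A \<psi> K)"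
proof -
  assume "psd A"
  hence "Im (qf A \<psi> K) = 0" "0 \<le> Re (qf A \<psi> K)" unfolding psd_def qf_def by auto
  thus ?thesis by (simp add: complex_eq_iff)
qed

lemma povm_psd: "povm N M \<Longrightarrow> Z \<in> sets N \<Longrightarrow> psd (M Z)"
  by (simp add: povm_def)

lemma povm_sums: "povm N M \<Longrightarrow> range A \<subseteq> sets N \<Longrightarrow> disjoint_family A \<Longrightarrow>
   (\<lambda>i. M (A i) m n) sums M (\<Union>i. A i) m n"
  by (simp add: povm_def)

lemma povm_empty: assumes "povm N M" shows "M {} m n = 0"
proof -
  have "(\<lambda>i. M ((\<lambda>_. {}) i) m n) sums M (\<Union>i. (\<lambda>_::nat. {}) i) m n"
    by (rule povm_sums[OF assms]) (auto simp: disjoint_family_on_def)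
  hence "(\<lambda>i::nat. M {} m n) sums M {} m n" by simp
  hence "(\<lambda>i::nat. M {} m n) \<longlonglongrightarrow> 0" using summable_LIMSEQ_zero sums_summable by blast
  thus ?thesis using LIMSEQ_const_iff by blast
qed

lemma povm_finadd: fixes A :: "nat \<Rightarrow> _" assumes P: "povm N M" and A: "\<And>i. A i \<in> sets N" and D: "disjoint_family A"
  shows "M (\<Union>i<k. A i) m n = (\<Sum>i<k. M (A i) m n)"
proof -
  let ?B = "\<lambda>i. if i < k then A i else {}"
  have "range ?B \<subseteq> sets N" using A by auto
  moreover have "disjoint_family ?B" using D by (auto simp: disjoint_family_on_def)
  ultimately have s: "(\<lambda>i. M (?B i) m n) sums M (\<Union>i. ?B i) m n" by (rule povm_sums[OF P])
  have "(\<lambda>i. M (?B i) m n) sums (\<Sum>i<k. M (?B i) m n)"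
    by (rule sums_finite) (auto simp: povm_empty[OF P])
  moreover have "(\<Union>i. ?B i) = (\<Union>i<k. A i)" by (auto split: if_splits)
  ultimately show ?thesis using s sums_unique2 by fastforce
qed

lemma povm_add: assumes P: "povm N M" and "A \<in> sets N" "B \<in> sets N" "A \<inter> B = {}"
  shows "M (A \<union> B) m n = M A m n + M B m n"
proof -
  let ?C = "\<lambda>i::nat. if i = 0 then A else if i = 1 then B else {}"
  have "M (\<Union>i<2. ?C i) m n = (\<Sum>i<2. M (?C i) m n)"
    by (rule povm_finadd[OF P]) (use assms in \<open>auto simp: disjoint_family_on_def\<close>)
  moreover have "(\<Union>i<2. ?C i) = A \<union> B" by (auto simp: lessThan_Suc numeral_2_eq_2)
  ultimately show ?thesis by (simp add: numeral_2_eq_2)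
qed

lemma qf_sums: assumes P: "povm N M" "range A \<subseteq> sets N" "disjoint_family A"
  shows "(\<lambda>i. qf (M (A i)) \<psi> K) sums qf (M (\<Union>i. A i)) \<psi> K"
  unfolding qf_def
  by (intro sums_sum sums_mult sums_mult2 povm_sums[OF P])

lemma qf_add: assumes P: "povm N M" and "A \<in> sets N" "B \<in> sets N" "A \<inter> B = {}"
  shows "qf (M (A \<union> B)) \<psi> K = qf (M A) \<psi> K + qf (M B) \<psi> K"
  unfolding qf_def using povm_add[OF assms]
  by (simp add: distrib_left distrib_right sum.distrib)

lemma qf_empty: "povm N M \<Longrightarrow> qf (M {}) \<psi> K = 0"
  by (simp add: qf_def povm_empty)

lemma qf_mono: assumes P: "povm N M" and Z: "Z \<in> sets N"
  shows "Re (qf (M Z) \<psi> K) \<le> Re (qf (M (space N)) \<psi> K)"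
proof -
  have "space N = Z \<union> (space N - Z)" using sets.sets_into_space[OF Z] by auto
  hence "qf (M (space N)) \<psi> K = qf (M Z) \<psi> K + qf (M (space N - Z)) \<psi> K"
    using qf_add[OF P Z, of "space N - Z"] Z by auto
  moreover have "0 \<le> Re (qf (M (space N - Z)) \<psi> K)"
    using psd_qf[OF povm_psd[OF P]] Z by auto
  ultimately show ?thesis by simp
qed

definition nu :: "'a measure \<Rightarrow> ('a set \<Rightarrow> opmat) \<Rightarrow> (nat \<Rightarrow> complex) \<Rightarrow> nat \<Rightarrow> 'a measure" where
  "nu N M \<psi> K = measure_of (space N) (sets N) (\<lambda>Z. ennreal (Re (qf (M Z) \<psi> K)))"

lemma emeasure_nu: assumes P: "povm N M" and Z: "Z \<in> sets N"
  shows "emeasure (nu N M \<psi> K) Z = ennreal (Re (qf (M Z) \<psi> K))"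
  unfolding nu_def
proof (rule emeasure_measure_of_sigma[OF _ _ _ Z])
  show "sigma_algebra (space N) (sets N)" by (rule sets.sigma_algebra_axioms)
  show "positive (sets N) (\<lambda>Z. ennreal (Re (qf (M Z) \<psi> K)))"
    by (simp add: positive_def qf_empty[OF P])
  show "countably_additive (sets N) (\<lambda>Z. ennreal (Re (qf (M Z) \<psi> K)))"
    unfolding countably_additive_def
  proof safe
    fix A :: "nat \<Rightarrow> _" assume A: "range A \<subseteq> sets N" "disjoint_family A"
    have "(\<lambda>i. Re (qf (M (A i)) \<psi> K)) sums Re (qf (M (\<Union>i. A i)) \<psi> K)"
      by (rule sums_Re[OF qf_sums[OF P A]])
    moreover have "\<And>i. 0 \<le> Re (qf (M (A i)) \<psi> K)" using psd_qf[OF povm_psd[OF P]] A by auto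
    moreover have "0 \<le> Re (qf (M (\<Union>i. A i)) \<psi> K)" using psd_qf[OF povm_psd[OF P]] A by auto
    ultimately have "(\<lambda>i. ennreal (Re (qf (M (A i)) \<psi> K))) sums ennreal (Re (qf (M (\<Union>i. A i)) \<psi> K))"
      by simp
    thus "(\<Sum>i. ennreal (Re (qf (M (A i)) \<psi> K))) = ennreal (Re (qf (M (\<Union>i. A i)) \<psi> K))"
      by (rule sums_unique[symmetric])
  qed
qed

lemma nu_space: "space (nu N M \<psi> K) = space N" and nu_sets: "sets (nu N M \<psi> K) = sets N"
  unfolding nu_def by (simp_all add: sets.space_closed)

lemma nu_finite: assumes P: "povm N M" shows "finite_measure (nu N M \<psi> K)"
  by (rule finite_measureI) (simp add: nu_space emeasure_nu[OF P])




definition pv :: "nat \<Rightarrow> nat \<Rightarrow> complex \<Rightarrow> nat \<Rightarrow> complex" where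
  "pv m n c j = (if j = m then 1 else 0) + (if j = n then c else 0)"

lemma qf_pv: assumes "m < K" "n < K"
  shows "qf A (pv m n c) K = A m m + c * A m n + cnj c * A n m + cnj c * c * A n n"
proof -
  have dd: "(\<Sum>a<K. \<Sum>b<K. if a = p \<and> b = q then X else 0) = X" if "p < K" "q < K" for p q and X :: complex
  proof -
    have "\<And>a. (\<Sum>b<K. if a = p \<and> b = q then X else 0) = (if a = p then X else 0)"
      using that by (auto simp: if_distrib cong: if_cong)
    thus ?thesis using that by simp
  qed
  have e: "cnj (pv m n c a) * A a b * pv m n c b =
     ((if a = m \<and> b = m then A m m else 0) + (if a = m \<and> b = n then c * A m n else 0)) +
     ((if a = n \<and> b = m then cnj c * A n m else 0) + (if a = n \<and> b = n then cnj c * c * A n n else 0))" for a b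
    by (auto simp: pv_def algebra_simps)
  show ?thesis
    unfolding qf_def e sum.distrib using dd assms by simp
qed

lemma polar: "A m n = (1/4) * (\<Sum>k<4. cnj (\<i>^k) * qf A (pv m n (\<i>^k)) (Suc (max m n)))"
proof -
  have K: "m < Suc (max m n)" "n < Suc (max m n)" by auto
  show ?thesis
    unfolding qf_pv[OF K]
    by (simp add: numeral_eq_Suc lessThan_Suc algebra_simps)
qed

lemma psd_bound: assumes "psd A"
  shows "norm (A m n) \<le> (1/4) * (\<Sum>k<4. Re (qf A (pv m n (\<i>^k)) (Suc (max m n))))"
proof -
  let ?q = "\<lambda>k. qf A (pv m n (\<i>^k)) (Suc (max m n))"
  have "norm (A m n) = (1/4) * norm (\<Sum>k<4. cnj (\<i>^k) * ?q k)"
    by (subst polar) (simp add: norm_mult)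
  also have "\<dots> \<le> (1/4) * (\<Sum>k<4. norm (cnj (\<i>^k) * ?q k))"
    by (intro mult_left_mono norm_sum) auto
  also have "\<dots> = (1/4) * (\<Sum>k<4. Re (?q k))"
  proof -
    have "\<And>k. norm (cnj (\<i>^k) * ?q k) = Re (?q k)"
    proof -
      fix k
      have "?q k = complex_of_real (Re (?q k))" "0 \<le> Re (?q k)" using psd_qf[OF assms] by auto
      hence "norm (?q k) = Re (?q k)" by (metis norm_of_real abs_of_nonneg)
      thus "norm (cnj (\<i>^k) * ?q k) = Re (?q k)" by (simp add: norm_mult norm_power)
    qed
    thus ?thesis by simp
  qed
  finally show ?thesis .
qed

definition Cb :: "'a measure \<Rightarrow> ('a set \<Rightarrow> opmat) \<Rightarrow> nat \<Rightarrow> nat \<Rightarrow> real" where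
  "Cb N M m n = (1/4) * (\<Sum>k<4. Re (qf (M (space N)) (pv m n (\<i>^k)) (Suc (max m n))))"

lemma povm_bound: assumes P: "povm N M" and Z: "Z \<in> sets N"
  shows "norm (M Z m n) \<le> Cb N M m n"
proof -
  have "norm (M Z m n) \<le> (1/4) * (\<Sum>k<4. Re (qf (M Z) (pv m n (\<i>^k)) (Suc (max m n))))"
    by (rule psd_bound[OF povm_psd[OF P Z]])
  also have "\<dots> \<le> Cb N M m n" unfolding Cb_def
    by (intro mult_left_mono sum_mono qf_mono[OF P Z]) auto
  finally show ?thesis .
qed

lemma M_Tset_measurable: assumes P: "povm PhSp M" and Z: "Z \<in> sets PhSp"
  shows "(\<lambda>\<theta>. M (Tset \<theta> Z) m n) \<in> borel_measurable lborel"
proof -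
  define S where "S = (\<lambda>x. rot (- fst x) (snd x)) -` Z \<inter> space (lborel \<Otimes>\<^sub>M PhSp)"
  have S: "S \<in> sets (lborel \<Otimes>\<^sub>M PhSp)" unfolding S_def by (rule measurable_sets[OF rot_measurable Z])
  have pre: "Pair \<theta> -` S = Tset \<theta> Z" for \<theta>
    using Tset_char[OF sets.sets_into_space[OF Z]] by (auto simp: S_def space_pair_measure)
  have meas_k: "(\<lambda>\<theta>. qf (M (Tset \<theta> Z)) \<psi> K) \<in> borel_measurable lborel" for \<psi> K
  proof -
    interpret F: finite_measure "nu PhSp M \<psi> K" by (rule nu_finite[OF P])
    have S': "S \<in> sets (lborel \<Otimes>\<^sub>M nu PhSp M \<psi> K)"
      using S by (subst sets_pair_measure_cong[OF refl nu_sets])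
    have "(\<lambda>\<theta>. emeasure (nu PhSp M \<psi> K) (Pair \<theta> -` S)) \<in> borel_measurable lborel"
      by (rule F.measurable_emeasure_Pair[OF S'])
    hence "(\<lambda>\<theta>. complex_of_real (enn2real (emeasure (nu PhSp M \<psi> K) (Pair \<theta> -` S)))) \<in> borel_measurable lborel"
      by measurable
    moreover have "complex_of_real (enn2real (emeasure (nu PhSp M \<psi> K) (Pair \<theta> -` S))) = qf (M (Tset \<theta> Z)) \<psi> K" for \<theta>
    proof -
      have T: "Tset \<theta> Z \<in> sets PhSp" by (rule Tset_sets[OF Z])
      have q: "qf (M (Tset \<theta> Z)) \<psi> K = complex_of_real (Re (qf (M (Tset \<theta> Z)) \<psi> K)) \<and> 0 \<le> Re (qf (M (Tset \<theta> Z)) \<psi> K)"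
        by (rule psd_qf[OF povm_psd[OF P T]])
      show ?thesis unfolding pre emeasure_nu[OF P T] using q by simp
    qed
    ultimately show ?thesis by simp
  qed
  have "(\<lambda>\<theta>. (1/4) * (\<Sum>k<4. cnj (\<i>^k) * qf (M (Tset \<theta> Z)) (pv m n (\<i>^k)) (Suc (max m n))))
        \<in> borel_measurable lborel"
    using meas_k by measurable
  thus ?thesis by (subst polar) simp
qed




definition avg :: "(real \<Rightarrow> complex) \<Rightarrow> complex" where
  "avg g = (1/(2*pi)) *\<^sub>R (\<integral>\<theta>. indicator {0..<2*pi} \<theta> *\<^sub>R g \<theta> \<partial>lborel)"

lemma int_Ico: fixes a b :: real assumes g: "g \<in> borel_measurable lborel" and B: "\<And>\<theta>. norm (g \<theta>) \<le> B"
  shows "integrable lborel (\<lambda>\<theta>. indicator {a..<b} \<theta> *\<^sub>R (g \<theta> :: complex))"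
proof (rule integrableI_bounded_set[where A="{a..<b}" and B=B])
  show "{a..<b} \<in> sets lborel" by measurable
  show "(\<lambda>\<theta>. indicator {a..<b} \<theta> *\<^sub>R g \<theta>) \<in> borel_measurable lborel" using g by measurable
  show "emeasure lborel {a..<b} < \<infinity>"
    by (cases "a \<le> b") auto
qed (use B in \<open>auto split: split_indicator\<close>)

lemma avg_const: "avg (\<lambda>_. c) = c"
proof -
  have "(\<integral>\<theta>. indicator {0..<2*pi} \<theta> *\<^sub>R c \<partial>lborel) = measure lborel {0..<2*pi} *\<^sub>R c"
    using set_integral_const[of "{0..<2*pi}" lborel c] by (simp add: set_lebesgue_integral_def)
  thus ?thesis by (simp add: avg_def)
qed

lemma avg_cong: "(\<And>\<theta>. 0 \<le> \<theta> \<Longrightarrow> \<theta> < 2*pi \<Longrightarrow> g \<theta> = h \<theta>) \<Longrightarrow> avg g = avg h"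
proof -
  assume a: "\<And>\<theta>. 0 \<le> \<theta> \<Longrightarrow> \<theta> < 2*pi \<Longrightarrow> g \<theta> = h \<theta>"
  have "(\<lambda>\<theta>. indicator {0..<2*pi} \<theta> *\<^sub>R g \<theta>) = (\<lambda>\<theta>. indicator {0..<2*pi} \<theta> *\<^sub>R h \<theta>)"
    using a by (auto split: split_indicator)
  thus ?thesis by (simp add: avg_def)
qed

lemma avg_sum: assumes "finite I" and g: "\<And>i. i \<in> I \<Longrightarrow> g i \<in> borel_measurable lborel"
  and B: "\<And>i \<theta>. i \<in> I \<Longrightarrow> norm (g i \<theta>) \<le> B i"
  shows "avg (\<lambda>\<theta>. \<Sum>i\<in>I. g i \<theta>) = (\<Sum>i\<in>I. avg (g i))"
proof -
  have "(\<integral>\<theta>. indicator {0..<2*pi} \<theta> *\<^sub>R (\<Sum>i\<in>I. g i \<theta>) \<partial>lborel) =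
        (\<integral>\<theta>. (\<Sum>i\<in>I. indicator {0..<2*pi} \<theta> *\<^sub>R g i \<theta>) \<partial>lborel)"
    by (simp add: scaleR_sum_right)
  also have "\<dots> = (\<Sum>i\<in>I. \<integral>\<theta>. indicator {0..<2*pi} \<theta> *\<^sub>R g i \<theta> \<partial>lborel)"
    by (rule Bochner_Integration.integral_sum) (use int_Ico[OF g B] in auto)
  finally show ?thesis by (simp add: avg_def scaleR_sum_right)
qed

lemma avg_cmult: "avg (\<lambda>\<theta>. c * g \<theta>) = c * avg g"
proof -
  have "(\<integral>\<theta>. indicator {0..<2*pi} \<theta> *\<^sub>R (c * g \<theta>) \<partial>lborel) = (\<integral>\<theta>. c * (indicator {0..<2*pi} \<theta> *\<^sub>R g \<theta>) \<partial>lborel)"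
    by (simp add: scaleR_conv_of_real algebra_simps)
  also have "\<dots> = c * (\<integral>\<theta>. indicator {0..<2*pi} \<theta> *\<^sub>R g \<theta> \<partial>lborel)" by (rule integral_mult_right_zero)
  finally show ?thesis by (simp add: avg_def scaleR_conv_of_real algebra_simps)
qed

lemma avg_real_nonneg: assumes "\<And>\<theta>. 0 \<le> \<theta> \<Longrightarrow> \<theta> < 2*pi \<Longrightarrow> g \<theta> = complex_of_real (r \<theta>) \<and> 0 \<le> r \<theta>"
  shows "Im (avg g) = 0 \<and> 0 \<le> Re (avg g)"
proof -
  have "avg g = avg (\<lambda>\<theta>. complex_of_real (r \<theta>))" by (rule avg_cong) (use assms in auto)
  also have "\<dots> = complex_of_real ((1/(2*pi)) * (\<integral>\<theta>. indicator {0..<2*pi} \<theta> * r \<theta> \<partial>lborel))"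
  proof -
    have "(\<lambda>\<theta>. indicator {0..<2*pi} \<theta> *\<^sub>R complex_of_real (r \<theta>)) = (\<lambda>\<theta>. complex_of_real (indicator {0..<2*pi} \<theta> * r \<theta>))"
      by (auto split: split_indicator)
    hence "(\<integral>\<theta>. indicator {0..<2*pi} \<theta> *\<^sub>R complex_of_real (r \<theta>) \<partial>lborel) = complex_of_real (\<integral>\<theta>. indicator {0..<2*pi} \<theta> * r \<theta> \<partial>lborel)"
      by (simp only: integral_complex_of_real)
    thus ?thesis unfolding avg_def by (simp add: scaleR_conv_of_real)
  qed
  finally have e: "avg g = complex_of_real ((1/(2*pi)) * (\<integral>\<theta>. indicator {0..<2*pi} \<theta> * r \<theta> \<partial>lborel))" .
  have "0 \<le> (\<integral>\<theta>. indicator {0..<2*pi} \<theta> * r \<theta> \<partial>lborel)"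
    by (rule integral_nonneg_AE) (use assms in \<open>auto split: split_indicator\<close>)
  thus ?thesis unfolding e by simp
qed

lemma avg_shift: assumes g: "g \<in> borel_measurable lborel" and B: "\<And>\<theta>. norm (g \<theta>) \<le> B"
  and per: "\<And>\<theta>. g (\<theta> + 2*pi) = g \<theta>" and phi: "0 \<le> \<phi>" "\<phi> < 2*pi"
  shows "avg (\<lambda>\<theta>. g (\<theta> + \<phi>)) = avg g"
proof -
  have gs: "(\<lambda>\<theta>. g (\<theta> + c)) \<in> borel_measurable lborel" for c using g by measurable
  have Bs: "norm (g (\<theta> + c)) \<le> B" for \<theta> c using B by simp
  have "(\<integral>\<theta>. indicator {0..<2*pi} \<theta> *\<^sub>R g (\<theta> + \<phi>) \<partial>lborel) =
        (\<integral>\<theta>. indicator {0..<2*pi-\<phi>} \<theta> *\<^sub>R g (\<theta> + \<phi>) + indicator {2*pi-\<phi>..<2*pi} \<theta> *\<^sub>R g (\<theta> + \<phi>) \<partial>lborel)"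
    by (intro Bochner_Integration.integral_cong) (use phi in \<open>auto split: split_indicator\<close>)
  also have "\<dots> = (\<integral>\<theta>. indicator {0..<2*pi-\<phi>} \<theta> *\<^sub>R g (\<theta> + \<phi>) \<partial>lborel) + (\<integral>\<theta>. indicator {2*pi-\<phi>..<2*pi} \<theta> *\<^sub>R g (\<theta> + \<phi>) \<partial>lborel)"
    by (rule Bochner_Integration.integral_add) (rule int_Ico[OF gs Bs])+
  also have "(\<integral>\<theta>. indicator {0..<2*pi-\<phi>} \<theta> *\<^sub>R g (\<theta> + \<phi>) \<partial>lborel) = (\<integral>x. indicator {\<phi>..<2*pi} x *\<^sub>R g x \<partial>lborel)"
  proof -
    have "(\<integral>x. indicator {\<phi>..<2*pi} x *\<^sub>R g x \<partial>lborel) = \<bar>1\<bar> *\<^sub>R (\<integral>x. indicator {\<phi>..<2*pi} (\<phi> + 1 * x) *\<^sub>R g (\<phi> + 1 * x) \<partial>lborel)"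
      by (rule lborel_integral_real_affine) simp
    also have "\<dots> = (\<integral>\<theta>. indicator {0..<2*pi-\<phi>} \<theta> *\<^sub>R g (\<theta> + \<phi>) \<partial>lborel)"
      by (auto intro!: Bochner_Integration.integral_cong split: split_indicator simp: add.commute)
    finally show ?thesis by simp
  qed
  also have "(\<integral>\<theta>. indicator {2*pi-\<phi>..<2*pi} \<theta> *\<^sub>R g (\<theta> + \<phi>) \<partial>lborel) = (\<integral>x. indicator {0..<\<phi>} x *\<^sub>R g x \<partial>lborel)"
  proof -
    have "(\<integral>x. indicator {0..<\<phi>} x *\<^sub>R g x \<partial>lborel) = \<bar>1\<bar> *\<^sub>R (\<integral>x. indicator {0..<\<phi>} ((\<phi> - 2*pi) + 1 * x) *\<^sub>R g ((\<phi> - 2*pi) + 1 * x) \<partial>lborel)"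
      by (rule lborel_integral_real_affine) simp
    also have "\<dots> = (\<integral>x. indicator {0..<\<phi>} ((\<phi> - 2*pi) + x) *\<^sub>R g ((\<phi> - 2*pi) + x) \<partial>lborel)"
      by simp
    also have "\<dots> = (\<integral>\<theta>. indicator {2*pi-\<phi>..<2*pi} \<theta> *\<^sub>R g (\<theta> + \<phi>) \<partial>lborel)"
    proof (intro Bochner_Integration.integral_cong refl)
      fix x
      have "g (\<phi> - 2*pi + x) = g (x + \<phi>)" using per[of "\<phi> - 2*pi + x"] by (simp add: algebra_simps)
      thus "indicator {0..<\<phi>} ((\<phi> - 2*pi) + x) *\<^sub>R g ((\<phi> - 2*pi) + x) = indicator {2*pi-\<phi>..<2*pi} x *\<^sub>R g (x + \<phi>)"
        by (auto split: split_indicator)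
    qed
    finally show ?thesis by simp
  qed
  also have "(\<integral>x. indicator {\<phi>..<2*pi} x *\<^sub>R g x \<partial>lborel) + (\<integral>x. indicator {0..<\<phi>} x *\<^sub>R g x \<partial>lborel) =
     (\<integral>x. indicator {\<phi>..<2*pi} x *\<^sub>R g x + indicator {0..<\<phi>} x *\<^sub>R g x \<partial>lborel)"
    by (rule Bochner_Integration.integral_add[symmetric]) (rule int_Ico[OF g B])+
  also have "\<dots> = (\<integral>x. indicator {0..<2*pi} x *\<^sub>R g x \<partial>lborel)"
    by (intro Bochner_Integration.integral_cong) (use phi in \<open>auto split: split_indicator\<close>)
  finally show ?thesis by (simp add: avg_def)
qed




definition Gf :: "((real \<times> real) set \<Rightarrow> opmat) \<Rightarrow> (real \<times> real) set \<Rightarrow> nat \<Rightarrow> nat \<Rightarrow> real \<Rightarrow> complex" where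
  "Gf M Z m n \<theta> = cis (- \<theta> * (real m - real n)) * M (Tset \<theta> Z) m n"

definition Pav :: "((real \<times> real) set \<Rightarrow> opmat) \<Rightarrow> (real \<times> real) set \<Rightarrow> opmat" where
  "Pav M Z = (\<lambda>m n. avg (Gf M Z m n))"

lemma Gf_meas: "povm PhSp M \<Longrightarrow> Z \<in> sets PhSp \<Longrightarrow> Gf M Z m n \<in> borel_measurable lborel"
proof -
  assume a: "povm PhSp M" "Z \<in> sets PhSp"
  have c: "(\<lambda>x. cis (- x * (real m - real n))) \<in> borel_measurable borel"
    by (intro borel_measurable_continuous_onI continuous_intros)
  have c': "(\<lambda>x. cis (- x * (real m - real n))) \<in> borel_measurable lborel"
    using c by (simp cong: measurable_cong_sets)
  show ?thesis unfolding Gf_def by (rule borel_measurable_times[OF c' M_Tset_measurable[OF a]])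
qed

lemma Gf_bound: "povm PhSp M \<Longrightarrow> Z \<in> sets PhSp \<Longrightarrow> norm (Gf M Z m n \<theta>) \<le> Cb PhSp M m n"
  unfolding Gf_def using povm_bound[OF _ Tset_sets] by (simp add: norm_mult)

lemma cis_per: "cis (- (\<theta> + 2*pi) * (real m - real n)) = cis (- \<theta> * (real m - real n))"
proof -
  have i: "real n - real m \<in> \<int>" by (intro Ints_diff Ints_of_nat)
  have "- (\<theta> + 2*pi) * (real m - real n) = - \<theta> * (real m - real n) + 2*pi*(real n - real m)"
    by (simp add: algebra_simps)
  hence "cis (- (\<theta> + 2*pi) * (real m - real n)) = cis (- \<theta> * (real m - real n)) * cis (2*pi*(real n - real m))"
    by (simp only: cis_mult)
  thus ?thesis using cis_multiple_2pi[OF i] by simp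
qed

lemma Gf_per: "Gf M Z m n (\<theta> + 2*pi) = Gf M Z m n \<theta>"
  unfolding Gf_def cis_per Tset_period ..

lemma avg_sum2: fixes K :: nat and f :: "nat \<Rightarrow> nat \<Rightarrow> real \<Rightarrow> complex" assumes f: "\<And>a b. f a b \<in> borel_measurable lborel" and B: "\<And>a b \<theta>. norm (f a b \<theta>) \<le> B a b"
  shows "avg (\<lambda>\<theta>. \<Sum>a<K. \<Sum>b<K. f a b \<theta>) = (\<Sum>a<K. \<Sum>b<K. avg (f a b))"
proof -
  have "avg (\<lambda>\<theta>. \<Sum>a<K. \<Sum>b<K. f a b \<theta>) = (\<Sum>a<K. avg (\<lambda>\<theta>. \<Sum>b<K. f a b \<theta>))"
  proof (rule avg_sum)
    show "(\<lambda>\<theta>. \<Sum>b<K. f a b \<theta>) \<in> borel_measurable lborel" for a using f by measurable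
    show "norm (\<Sum>b<K. f a b \<theta>) \<le> (\<Sum>b<K. B a b)" for a \<theta>
      by (rule order_trans[OF norm_sum sum_mono[OF B]])
    show "finite {..<K}" by simp
  qed
  also have "\<dots> = (\<Sum>a<K. \<Sum>b<K. avg (f a b))"
    by (intro sum.cong refl avg_sum) (use f B in auto)
  finally show ?thesis .
qed

lemma Pav_psd: assumes P: "povm PhSp M" and Z: "Z \<in> sets PhSp" shows "psd (Pav M Z)"
  unfolding psd_def
proof (intro allI)
  fix \<psi> :: "nat \<Rightarrow> complex" and K :: nat
  have "(\<Sum>m<K. \<Sum>n<K. cnj (\<psi> m) * Pav M Z m n * \<psi> n) =
        (\<Sum>m<K. \<Sum>n<K. avg (\<lambda>\<theta>. (cnj (\<psi> m) * \<psi> n) * Gf M Z m n \<theta>))"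
    unfolding Pav_def avg_cmult by (simp add: algebra_simps)
  also have "\<dots> = avg (\<lambda>\<theta>. \<Sum>m<K. \<Sum>n<K. (cnj (\<psi> m) * \<psi> n) * Gf M Z m n \<theta>)"
  proof (rule avg_sum2[symmetric])
    show "(\<lambda>\<theta>. (cnj (\<psi> m) * \<psi> n) * Gf M Z m n \<theta>) \<in> borel_measurable lborel" for m n
      using Gf_meas[OF P Z] by measurable
    show "norm ((cnj (\<psi> m) * \<psi> n) * Gf M Z m n \<theta>) \<le> norm (cnj (\<psi> m) * \<psi> n) * Cb PhSp M m n" for m n \<theta>
      unfolding norm_mult[of "cnj (\<psi> m) * \<psi> n"] by (intro mult_left_mono Gf_bound[OF P Z]) auto
  qed
  also have "\<dots> = avg (\<lambda>\<theta>. qf (M (Tset \<theta> Z)) (\<lambda>j. cis (\<theta> * real j) * \<psi> j) K)"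
  proof -
    have "(cnj (\<psi> m) * \<psi> n) * Gf M Z m n \<theta> =
       cnj (cis (\<theta> * real m) * \<psi> m) * M (Tset \<theta> Z) m n * (cis (\<theta> * real n) * \<psi> n)" for m n \<theta>
    proof -
      have "cis (- \<theta> * (real m - real n)) = cnj (cis (\<theta> * real m)) * cis (\<theta> * real n)"
        by (simp add: cis_cnj cis_mult algebra_simps)
      thus ?thesis unfolding Gf_def by (simp add: algebra_simps)
    qed
    note h = this
    show ?thesis unfolding qf_def by (simp only: h)
  qed
  finally have e: "(\<Sum>m<K. \<Sum>n<K. cnj (\<psi> m) * Pav M Z m n * \<psi> n) =
     avg (\<lambda>\<theta>. qf (M (Tset \<theta> Z)) (\<lambda>j. cis (\<theta> * real j) * \<psi> j) K)" .
  have "Im (avg (\<lambda>\<theta>. qf (M (Tset \<theta> Z)) (\<lambda>j. cis (\<theta> * real j) * \<psi> j) K)) = 0 \<and>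
        0 \<le> Re (avg (\<lambda>\<theta>. qf (M (Tset \<theta> Z)) (\<lambda>j. cis (\<theta> * real j) * \<psi> j) K))"
    by (rule avg_real_nonneg) (rule psd_qf[OF povm_psd[OF P Tset_sets[OF Z]]])
  thus "Im (\<Sum>m<K. \<Sum>n<K. cnj (\<psi> m) * Pav M Z m n * \<psi> n) = 0 \<and>
        0 \<le> Re (\<Sum>m<K. \<Sum>n<K. cnj (\<psi> m) * Pav M Z m n * \<psi> n)" unfolding e .
qed

lemma Tset_space: "Tset \<theta> (space PhSp) = space PhSp"
  unfolding space_PhSp Tset_Times shift_full ..

lemma Pav_space: assumes P: "povm PhSp M" shows "Pav M (space PhSp) = id_op"
proof (intro ext)
  fix m n
  have "Gf M (space PhSp) m n = (\<lambda>_. id_op m n)"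
    using P by (auto simp: Gf_def Tset_space povm_def id_op_def)
  thus "Pav M (space PhSp) m n = id_op m n" by (simp add: Pav_def avg_const)
qed




lemma Pav_sums: assumes P: "povm PhSp M" and A: "range A \<subseteq> sets PhSp" and D: "disjoint_family A"
  shows "(\<lambda>i. Pav M (A i) m n) sums Pav M (\<Union>i. A i) m n"
proof -
  have Ai: "A i \<in> sets PhSp" for i using A by auto
  have U: "(\<Union>i. A i) \<in> sets PhSp" using A by auto
  have TD: "disjoint_family (\<lambda>i. Tset \<theta> (A i))" for \<theta>
    using D unfolding disjoint_family_on_def
    by (auto simp: Tset_char[OF sets.sets_into_space[OF Ai]])
  have TU: "Tset \<theta> (\<Union>i. A i) = (\<Union>i. Tset \<theta> (A i))" for \<theta>
    unfolding Tset_def by auto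
  have Gs: "(\<lambda>i. Gf M (A i) m n \<theta>) sums Gf M (\<Union>i. A i) m n \<theta>" for \<theta>
    unfolding Gf_def TU
    by (intro sums_mult povm_sums[OF P _ TD]) (use Tset_sets[OF Ai] in auto)
  have bnd: "norm (\<Sum>i<N. Gf M (A i) m n \<theta>) \<le> Cb PhSp M m n" for N \<theta>
  proof -
    have "(\<Sum>i<N. Gf M (A i) m n \<theta>) = cis (- \<theta> * (real m - real n)) * (\<Sum>i<N. M (Tset \<theta> (A i)) m n)"
      by (simp add: Gf_def sum_distrib_left)
    also have "(\<Sum>i<N. M (Tset \<theta> (A i)) m n) = M (\<Union>i<N. Tset \<theta> (A i)) m n"
      by (rule povm_finadd[OF P Tset_sets[OF Ai] TD, symmetric])
    finally have "norm (\<Sum>i<N. Gf M (A i) m n \<theta>) = norm (M (\<Union>i<N. Tset \<theta> (A i)) m n)"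
      by (simp add: norm_mult)
    also have "\<dots> \<le> Cb PhSp M m n"
      by (rule povm_bound[OF P]) (use Tset_sets[OF Ai] in auto)
    finally show ?thesis .
  qed
  have psum: "(\<Sum>i<N. Pav M (A i) m n) = avg (\<lambda>\<theta>. \<Sum>i<N. Gf M (A i) m n \<theta>)" for N
    unfolding Pav_def
    by (rule avg_sum[symmetric]) (use Gf_meas[OF P Ai] Gf_bound[OF P Ai] in auto)
  let ?s = "\<lambda>N \<theta>. indicator {0..<2*pi} \<theta> *\<^sub>R (\<Sum>i<N. Gf M (A i) m n \<theta>)"
  let ?f = "\<lambda>\<theta>. indicator {0..<2*pi} \<theta> *\<^sub>R Gf M (\<Union>i. A i) m n \<theta>"
  let ?w = "\<lambda>\<theta>. norm (indicator {0..<2*pi} \<theta> *\<^sub>R complex_of_real (Cb PhSp M m n))"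
  have lim: "(\<lambda>N. integral\<^sup>L lborel (?s N)) \<longlonglongrightarrow> integral\<^sup>L lborel ?f"
  proof (rule integral_dominated_convergence)
    show "?f \<in> borel_measurable lborel" using Gf_meas[OF P U] by measurable
    show "?s N \<in> borel_measurable lborel" for N using Gf_meas[OF P Ai] by measurable
    show "integrable lborel ?w"
      by (rule integrable_norm, rule int_Ico[where B="norm (complex_of_real (Cb PhSp M m n))"]) auto
    show "AE \<theta> in lborel. (\<lambda>N. ?s N \<theta>) \<longlonglongrightarrow> ?f \<theta>"
      using Gs unfolding sums_def by (auto intro!: tendsto_scaleR)
    show "AE \<theta> in lborel. norm (?s k \<theta>) \<le> ?w \<theta>" for k
      by (intro AE_I2) (auto split: split_indicator intro: order_trans[OF bnd abs_ge_self])
  qed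
  have "(\<lambda>N. (1/(2*pi)) *\<^sub>R integral\<^sup>L lborel (?s N)) \<longlonglongrightarrow> (1/(2*pi)) *\<^sub>R integral\<^sup>L lborel ?f"
    by (rule tendsto_scaleR[OF tendsto_const lim])
  thus ?thesis unfolding sums_def psum by (simp add: avg_def Pav_def)
qed

lemma Pav_povm: "povm PhSp M \<Longrightarrow> povm PhSp (Pav M)"
  unfolding povm_def[of PhSp "Pav M"]
  using Pav_psd Pav_space Pav_sums by blast




lemma Pav_F: assumes J: "joint_observable M F E" and S: "smeared_number F" and X: "X \<in> sets Rplus"
  shows "Pav M (X \<times> {0..<2*pi}) = F X"
proof (intro ext)
  fix m n
  obtain \<mu> :: "nat \<Rightarrow> real measure" where mu: "\<forall>X\<in>sets Rplus. F X = (\<lambda>a b. if a = b then complex_of_real (measure (\<mu> a) X) else 0)"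
    using S unfolding smeared_number_def by blast
  have MF: "M (X \<times> {0..<2*pi}) = F X" using J X by (simp add: joint_observable_def)
  have "Gf M (X \<times> {0..<2*pi}) m n = (\<lambda>_. F X m n)"
    unfolding Gf_def Tset_Times shift_full MF using mu X by auto
  thus "Pav M (X \<times> {0..<2*pi}) m n = F X m n" by (simp add: Pav_def avg_const)
qed

lemma Pav_E: assumes J: "joint_observable M F E" and C: "covariant_phase E" and T: "\<Theta> \<in> sets Phase"
  shows "Pav M ({0..} \<times> \<Theta>) = E \<Theta>"
proof (intro ext)
  fix m n
  have "avg (Gf M ({0..} \<times> \<Theta>) m n) = avg (\<lambda>_. E \<Theta> m n)"
  proof (rule avg_cong)
    fix \<theta> :: real assume th: "0 \<le> \<theta>" "\<theta> < 2*pi"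
    have "M (Tset \<theta> ({0..} \<times> \<Theta>)) = E (shift_set \<Theta> \<theta>)"
      unfolding Tset_Times using J shift_sets[OF T] by (simp add: joint_observable_def)
    also have "\<dots> = phase_conj \<theta> (E \<Theta>)" using C T th by (simp add: covariant_phase_def)
    finally have "M (Tset \<theta> ({0..} \<times> \<Theta>)) m n = cis (\<theta> * (real m - real n)) * E \<Theta> m n"
      by (simp add: phase_conj_def)
    moreover have "cis (- \<theta> * (real m - real n)) * cis (\<theta> * (real m - real n)) = 1"
      by (simp add: cis_mult)
    ultimately show "Gf M ({0..} \<times> \<Theta>) m n \<theta> = E \<Theta> m n"
      unfolding Gf_def by (metis mult.assoc mult_1)
  qed
  thus "Pav M ({0..} \<times> \<Theta>) m n = E \<Theta> m n" by (simp add: Pav_def avg_const)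
qed

lemma Pav_cov: assumes P: "povm PhSp M" and X: "X \<in> sets Rplus" and T: "\<Theta> \<in> sets Phase"
  and phi: "0 \<le> \<phi>" "\<phi> < 2*pi"
  shows "phase_conj \<phi> (Pav M (X \<times> \<Theta>)) = Pav M (X \<times> shift_set \<Theta> \<phi>)"
proof (intro ext)
  fix m n
  let ?Z = "X \<times> \<Theta>"
  have Z: "?Z \<in> sets PhSp" unfolding PhSp_def using X T by (rule pair_measureI)
  have "Gf M (X \<times> shift_set \<Theta> \<phi>) m n = (\<lambda>\<theta>. cis (\<phi> * (real m - real n)) * Gf M ?Z m n (\<theta> + \<phi>))"
  proof
    fix \<theta>
    have "Tset \<theta> (X \<times> shift_set \<Theta> \<phi>) = Tset (\<theta> + \<phi>) ?Z"
      unfolding Tset_Times[symmetric] Tset_comp by (simp add: add.commute)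
    moreover have "cis (- \<theta> * (real m - real n)) = cis (\<phi> * (real m - real n)) * cis (- (\<theta> + \<phi>) * (real m - real n))"
      by (simp add: cis_mult algebra_simps)
    ultimately show "Gf M (X \<times> shift_set \<Theta> \<phi>) m n \<theta> = cis (\<phi> * (real m - real n)) * Gf M ?Z m n (\<theta> + \<phi>)"
      unfolding Gf_def by simp
  qed
  hence "Pav M (X \<times> shift_set \<Theta> \<phi>) m n = cis (\<phi> * (real m - real n)) * avg (\<lambda>\<theta>. Gf M ?Z m n (\<theta> + \<phi>))"
    by (simp add: Pav_def avg_cmult)
  also have "avg (\<lambda>\<theta>. Gf M ?Z m n (\<theta> + \<phi>)) = avg (Gf M ?Z m n)"
    by (rule avg_shift[OF Gf_meas[OF P Z] Gf_bound[OF P Z] Gf_per phi])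
  finally show "phase_conj \<phi> (Pav M ?Z) m n = Pav M (X \<times> shift_set \<Theta> \<phi>) m n"
    by (simp add: phase_conj_def Pav_def)
qed

theorem mainTheorem5:
  fixes F E :: "real set \<Rightarrow> opmat"
  assumes "smeared_number F" and "covariant_phase E"
  shows "(\<exists>M. joint_observable M F E) \<longleftrightarrow>
         (\<exists>P. joint_observable P F E \<and> phase_shift_covariant_ps P)"
proof
  assume "\<exists>M. joint_observable M F E"
  then obtain M where J: "joint_observable M F E" by blast
  have P: "povm PhSp M" using J by (simp add: joint_observable_def)
  have "joint_observable (Pav M) F E"
    unfolding joint_observable_def
    using Pav_povm[OF P] Pav_F[OF J assms(1)] Pav_E[OF J assms(2)] by blast
  moreover have "phase_shift_covariant_ps (Pav M)"
    unfolding phase_shift_covariant_ps_def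
    using Pav_povm[OF P] Pav_cov[OF P] by auto
  ultimately show "\<exists>P. joint_observable P F E \<and> phase_shift_covariant_ps P" by blast
qed blast


end
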